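(* Let $b>0$, let $f:[-b,b]\to\mathbb{R}$ be an odd function whose restriction to $[0,b]$ is convex, and let $p:[-b,b]\to[0,\infty)$ be a nondecreasing function that does not vanish on $(-b/3,b]$. Then for every $a\in[-b/3,b)$, \[ f\left(\frac{1}{\int_a^b p(x)\,dx}\int_a^b x\,p(x)\,dx\right)\le\frac{1}{\int_a^b p(x)\,dx}\int_a^b f(x)\,p(x)\,dx. \] *)

theory Defs
  imports "HOL-Analysis.Analysis"
begin

end

theory Submission
  imports Defs
begin

lemma support_line:
  fixes f :: "real \<Rightarrow> real"
  assumes cf: "convex_on {0..b} f" and m: "0 < m" "m < b"
  shows "\<exists>c. \<forall>x\<in>{0..b}. f m + c * (x - m) \<le> f x"
proof -
  define S where "S = (\<lambda>x. (f m - f x) / (m - x)) ` {0..<m}"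
  have ne: "S \<noteq> {}" using m by (auto simp: S_def)
  have slope: "(f m - f x) / (m - x) \<le> (f y - f m) / (y - m)"
    if "0 \<le> x" "x < m" "m < y" "y \<le> b" for x y
  proof -
    have "(f x - f m) / (x - m) \<le> (f x - f y) / (x - y)"
         "(f x - f y) / (x - y) \<le> (f m - f y) / (m - y)"
      using convex_on_slope_le[OF cf, of x y m] that m by auto
    moreover have "(f x - f m) / (x - m) = (f m - f x) / (m - x)"
      by (metis minus_diff_eq minus_divide_divide)
    moreover have "(f m - f y) / (m - y) = (f y - f m) / (y - m)"
      by (metis minus_diff_eq minus_divide_divide)
    ultimately show ?thesis by linarith
  qed
  have bdd: "bdd_above S"
    unfolding bdd_above_def S_def
    using slope[of _ b] m by (auto intro!: exI[of _ "(f b - f m) / (b - m)"])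
  define c where "c = Sup S"
  have up: "(f m - f x) / (m - x) \<le> c" if "0 \<le> x" "x < m" for x
    unfolding c_def using that bdd by (auto intro!: cSup_upper simp: S_def)
  have lo: "c \<le> (f y - f m) / (y - m)" if "m < y" "y \<le> b" for y
    unfolding c_def using ne that slope by (auto intro!: cSup_least simp: S_def)
  show ?thesis
  proof (intro exI ballI)
    fix x assume x: "x \<in> {0..b}"
    consider "x < m" | "x = m" | "m < x" by linarith
    then show "f m + c * (x - m) \<le> f x"
    proof cases
      case 1
      then have "(f m - f x) / (m - x) \<le> c" using up x by auto
      then have "f m - f x \<le> c * (m - x)" using 1 by (simp add: divide_le_eq)
      then show ?thesis by (simp add: algebra_simps)
    next
      case 2 then show ?thesis by simp
    next
      case 3
      then have "c \<le> (f x - f m) / (x - m)" using lo x by auto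
      then have "c * (x - m) \<le> f x - f m" using 3 by (simp add: le_divide_eq)
      then show ?thesis by simp
    qed
  qed
qed

lemma pos_int:
  fixes h :: "real \<Rightarrow> real"
  assumes hi: "h integrable_on {t..b}" and nn: "\<forall>x\<in>{t..b}. 0 \<le> h x"
    and uv: "t \<le> u" "u < v" "v \<le> b" and e: "\<forall>x\<in>{u..v}. e \<le> h x" "e > 0"
  shows "integral {t..b} h > 0"
proof -
  have i1: "h integrable_on {t..u}" "h integrable_on {u..v}" "h integrable_on {v..b}"
    using integrable_subinterval_real[OF hi] uv by auto
  have "integral {t..u} h + integral {u..b} h = integral {t..b} h"
    using Henstock_Kurzweil_Integration.integral_combine[OF uv(1) _ hi] uv by auto
  moreover have "integral {u..v} h + integral {v..b} h = integral {u..b} h"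
    using Henstock_Kurzweil_Integration.integral_combine[OF _ uv(3), of u h] uv integrable_subinterval_real[OF hi] by auto
  moreover have "0 \<le> integral {t..u} h" using i1 nn uv by (intro integral_nonneg) auto
  moreover have "0 \<le> integral {v..b} h" using i1 nn uv by (intro integral_nonneg) auto
  moreover have "integral {u..v} (\<lambda>_. e) \<le> integral {u..v} h"
    using i1 e by (intro integral_le) auto
  moreover have "integral {u..v} (\<lambda>_. e) = (v - u) * e"
    using integral_const_real[of u v e] uv(2) by simp
  moreover have "(v - u) * e > 0" using e(2) uv(2) by simp
  ultimately show ?thesis by linarith
qed

lemma pair_int:
  fixes h :: "real \<Rightarrow> real"
  assumes hi: "h integrable_on {-s..s}" and s: "0 \<le> s"
  shows "integral {-s..s} h = integral {0..s} (\<lambda>y. h y + h (-y))"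
proof -
  have i1: "h integrable_on {-s..0}" "h integrable_on {0..s}"
    using integrable_subinterval_real[OF hi] s by auto
  have i2: "(\<lambda>y. h (-y)) integrable_on {0..s}"
    using i1(1) Henstock_Kurzweil_Integration.integrable_reflect_real[where f=h and a="-s" and b=0] by simp
  have "integral {-s..0} h + integral {0..s} h = integral {-s..s} h"
    using Henstock_Kurzweil_Integration.integral_combine[OF _ _ hi] s by auto
  moreover have "integral {0..s} (\<lambda>y. h (-y)) = integral {-s..0} h"
    using Henstock_Kurzweil_Integration.integral_reflect_real[where f=h and a="-s" and b=0] by simp
  ultimately show ?thesis using integral_add[OF i1(2) i2] by linarith
qed

lemma bounded_meas_int:
  fixes g :: "real \<Rightarrow> real"
  assumes "g \<in> borel_measurable (lebesgue_on {a..b})" "\<forall>x\<in>{a..b}. \<bar>g x\<bar> \<le> K"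
  shows "g integrable_on {a..b}"
  by (rule measurable_bounded_by_integrable_imp_integrable_real[of g "{a..b}" "\<lambda>_. K"]) (use assms in auto)


lemma integral_nonneg':
  fixes g :: "real \<Rightarrow> real"
  assumes "\<forall>x\<in>S. 0 \<le> g x"
  shows "0 \<le> integral S g"
proof (cases "g integrable_on S")
  case True then show ?thesis using assms by (intro integral_nonneg) auto
next
  case False then show ?thesis by (simp add: not_integrable_integral)
qed

theorem corollary1:
  fixes f p :: "real \<Rightarrow> real" and a b :: real
  assumes "b > 0"
    and "\<forall>x\<in>{-b..b}. f (-x) = - f x"
    and "convex_on {0..b} f"
    and "mono_on {-b..b} p"
    and "\<forall>x\<in>{-b..b}. p x \<ge> 0"
    and "\<forall>x\<in>{-b/3<..b}. p x \<noteq> 0"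
    and "a \<in> {-b/3..<b}"
  shows "f ((1 / integral {a..b} p) * integral {a..b} (\<lambda>x. x * p x))
         \<le> (1 / integral {a..b} p) * integral {a..b} (\<lambda>x. f x * p x)"
proof -
  note bpos = assms(1) and odd = assms(2) and cf = assms(3)
  have a1: "-b/3 \<le> a" and a2: "a < b" using assms(7) by auto
  have f0: "f 0 = 0" using odd[rule_format, of 0] bpos by simp
  have pmono: "p x \<le> p y" if "-b \<le> x" "x \<le> y" "y \<le> b" for x y
    using mono_onD[OF assms(4)] that by auto
  have pnn: "0 \<le> p x" if "-b \<le> x" "x \<le> b" for x using assms(5) that by auto
  have ppos: "0 < p x" if "-b/3 < x" "x \<le> b" for x
    using assms(6) pnn[of x] that bpos by force
  obtain c0 where c0: "\<forall>x\<in>{0..b}. f (b/2) + c0 * (x - b/2) \<le> f x"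
    using support_line[OF cf, of "b/2"] bpos by auto
  define K where "K = \<bar>f b\<bar> + \<bar>f (b/2)\<bar> + \<bar>c0\<bar> * b"
  have fK0: "\<bar>f x\<bar> \<le> K" if "0 \<le> x" "x \<le> b" for x
  proof -
    have "f x \<le> (f b - f 0) / (b - 0) * (x - 0) + f 0"
      using convex_onD_Icc'[OF cf, of x] that by simp
    also have "\<dots> = f b * (x / b)" using f0 by simp
    also have "\<dots> \<le> \<bar>f b\<bar> * 1"
    proof -
      have h1: "\<bar>x / b\<bar> \<le> 1" using that bpos by auto
      have "\<bar>f b * (x / b)\<bar> \<le> \<bar>f b\<bar> * 1"
        unfolding abs_mult by (rule mult_left_mono[OF h1 abs_ge_zero])
      then show ?thesis by linarith
    qed
    finally have up: "f x \<le> \<bar>f b\<bar>" by simp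
    have "\<bar>c0 * (x - b/2)\<bar> \<le> \<bar>c0\<bar> * b"
      unfolding abs_mult using that bpos by (intro mult_left_mono) auto
    then have "- \<bar>f (b/2)\<bar> - \<bar>c0\<bar> * b \<le> f x" using c0 that by force
    moreover have "0 \<le> \<bar>c0\<bar> * b" using bpos by simp
    ultimately show ?thesis unfolding K_def abs_le_iff
      using up abs_ge_zero[of "f b"] abs_ge_zero[of "f (b/2)"] by linarith
  qed
  have fK: "\<bar>f x\<bar> \<le> K" if "-b \<le> x" "x \<le> b" for x
  proof (cases "0 \<le> x")
    case True then show ?thesis using fK0 that by auto
  next
    case False
    have "f x = - f (-x)" using odd[rule_format, of "-x"] that by auto
    then show ?thesis using fK0[of "-x"] False that by auto
  qed
  have lebI: "{a..b} \<in> sets lebesgue" by simp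
  have cont1: "continuous_on {0<..<b} f"
    by (rule convex_on_continuous) (auto intro: convex_on_subset[OF cf])
  have cont2: "continuous_on {-b<..<0} f"
  proof (rule continuous_on_eq)
    show "continuous_on {-b<..<0} (\<lambda>x. - f (- x))"
      by (intro continuous_on_minus continuous_on_compose2[OF cont1] continuous_on_id) auto
    show "- f (- x) = f x" if "x \<in> {-b<..<0}" for x
      using odd[rule_format, of x] that by auto
  qed
  define S0 where "S0 = {a<..<b} - {0}"
  have contS0: "continuous_on S0 f"
  proof (rule continuous_on_subset)
    show "continuous_on ({-b<..<0} \<union> {0<..<b}) f"
      using continuous_on_open_Un[OF _ _ cont2 cont1] by simp
    show "S0 \<subseteq> {-b<..<0} \<union> {0<..<b}" using a1 bpos by (auto simp: S0_def)
  qed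
  have S0leb: "S0 \<in> sets lebesgue" unfolding S0_def by (intro sets.Diff) auto
  have "f measurable_on S0"
    using measurable_on_iff_borel_measurable[OF S0leb, of f]
      continuous_imp_measurable_on_sets_lebesgue[OF contS0 S0leb] by simp
  moreover have "negligible ((S0 - {a..b}) \<union> ({a..b} - S0))"
    by (rule negligible_subset[of "{a,b,0}"]) (auto simp: S0_def)
  ultimately have "f measurable_on {a..b}" by (rule measurable_on_spike_set)
  then have fmeas: "f \<in> borel_measurable (lebesgue_on {a..b})"
    using measurable_on_iff_borel_measurable[OF lebI, of f] by simp
  have intP: "p integrable_on {a..b}"
    by (rule integrable_on_mono_on, rule mono_on_subset[OF assms(4)]) (use a1 in auto)
  have pmeas: "p \<in> borel_measurable (lebesgue_on {a..b})"
    using integrable_imp_measurable[OF intP] .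
  have idmeas: "(\<lambda>x. x) \<in> borel_measurable (lebesgue_on {a..b})"
    by (rule continuous_imp_measurable_on_sets_lebesgue[OF continuous_on_id lebI])
  have inab: "-b \<le> x \<and> x \<le> b" if "x \<in> {a..b}" for x using that a1 bpos by auto
  have pnnab: "\<forall>x\<in>{a..b}. 0 \<le> p x"
  proof
    fix x assume "x \<in> {a..b}"
    then have "-b \<le> x" "x \<le> b" using inab by blast+
    then show "0 \<le> p x" by (rule pnn)
  qed
  have intX: "(\<lambda>x. x * p x) integrable_on {a..b}"
  proof (rule bounded_meas_int)
    show "(\<lambda>x. x * p x) \<in> borel_measurable (lebesgue_on {a..b})"
      using idmeas pmeas by (rule borel_measurable_times)
    show "\<forall>x\<in>{a..b}. \<bar>x * p x\<bar> \<le> b * p b"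
    proof
      fix x assume x: "x \<in> {a..b}"
      have "\<bar>x\<bar> \<le> b" "\<bar>p x\<bar> \<le> p b" using inab[OF x] pnn pmono[of x b] bpos by auto
      then show "\<bar>x * p x\<bar> \<le> b * p b" unfolding abs_mult
        by (intro mult_mono) auto
    qed
  qed
  have intF: "(\<lambda>x. f x * p x) integrable_on {a..b}"
  proof (rule bounded_meas_int)
    show "(\<lambda>x. f x * p x) \<in> borel_measurable (lebesgue_on {a..b})"
      using fmeas pmeas by (rule borel_measurable_times)
    show "\<forall>x\<in>{a..b}. \<bar>f x * p x\<bar> \<le> K * p b"
    proof
      fix x assume x: "x \<in> {a..b}"
      have "\<bar>f x\<bar> \<le> K" "\<bar>p x\<bar> \<le> p b" using inab[OF x] fK pnn pmono[of x b] bpos by auto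
      then show "\<bar>f x * p x\<bar> \<le> K * p b" unfolding abs_mult
        by (intro mult_mono) auto
    qed
  qed
  define W where "W = integral {a..b} p"
  define I1 where "I1 = integral {a..b} (\<lambda>x. x * p x)"
  define u where "u = (a + b) / 2"
  have u: "a < u" "u < b" "-b/3 < u" using a1 a2 by (auto simp: u_def)
  have pu: "0 < p u" using ppos u by auto
  have Wpos: "W > 0" unfolding W_def
  proof (rule pos_int[OF intP _ _ u(2) order_refl])
    show "\<forall>x\<in>{a..b}. 0 \<le> p x" by (rule pnnab)
    show "a \<le> u" using u by simp
    show "\<forall>x\<in>{u..b}. p u \<le> p x"
    proof
      fix x assume x: "x \<in> {u..b}"
      have "-b \<le> u" using u(3) bpos by linarith
      then show "p u \<le> p x" using x by (intro pmono) auto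
    qed
  qed (rule pu)
  define v where "v = (u + b) / 2"
  have v: "u < v" "v < b" using u by (auto simp: v_def)
  have "integral {a..b} (\<lambda>x. (b - x) * p x) > 0"
  proof (rule pos_int[of _ a b u v "(b - v) * p u"])
    show "(\<lambda>x. (b - x) * p x) integrable_on {a..b}"
      using integrable_diff[OF integrable_on_cmult_left[OF intP, of b] intX]
      by (simp add: algebra_simps)
    show "\<forall>x\<in>{a..b}. 0 \<le> (b - x) * p x" using pnnab by simp
    show "\<forall>x\<in>{u..v}. (b - v) * p u \<le> (b - x) * p x"
    proof
      fix x assume x: "x \<in> {u..v}"
      show "(b - v) * p u \<le> (b - x) * p x"
      proof (rule mult_mono)
        have "-b \<le> u" using u(3) bpos by linarith
        then show "p u \<le> p x" using x v by (intro pmono) auto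
      qed (use x v pu in auto)
    qed
  qed (use u v pu in auto)
  moreover have "integral {a..b} (\<lambda>x. (b - x) * p x) = b * W - I1"
  proof -
    have "integral {a..b} (\<lambda>x. (b - x) * p x) = integral {a..b} (\<lambda>x. b * p x - x * p x)"
      by (simp add: algebra_simps)
    also have "\<dots> = b * W - I1"
      using integral_diff[OF integrable_on_cmult_left[OF intP, of b] intX]
      by (simp add: W_def I1_def)
    finally show ?thesis .
  qed
  ultimately have I1b: "I1 < b * W" by simp
  have I1pos: "I1 > 0"
  proof (cases "0 \<le> a")
    case True
    have u0: "0 < u" using True u by linarith
    show ?thesis unfolding I1_def
    proof (rule pos_int[of _ a b u b "u * p u"])
      show "\<forall>x\<in>{a..b}. 0 \<le> x * p x" using True pnnab by auto
      show "\<forall>x\<in>{u..b}. u * p u \<le> x * p x"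
      proof
        fix x assume x: "x \<in> {u..b}"
        show "u * p u \<le> x * p x"
        proof (rule mult_mono)
          show "p u \<le> p x" using x u0 bpos by (intro pmono) auto
        qed (use x u0 pnnab u in auto)
      qed
    qed (use intX u u0 pu in auto)
  next
    case False
    define s where "s = - a"
    have s: "0 < s" "s < b" "a = -s" using False a1 bpos by (auto simp: s_def)
    have intXs: "(\<lambda>x. x * p x) integrable_on {-s..s}"
      using integrable_subinterval_real[OF intX] s by auto
    have intXsb: "(\<lambda>x. x * p x) integrable_on {s..b}"
      using integrable_subinterval_real[OF intX] s by auto
    have "integral {a..s} (\<lambda>x. x * p x) + integral {s..b} (\<lambda>x. x * p x) = I1"
      unfolding I1_def using Henstock_Kurzweil_Integration.integral_combine[OF _ _ intX, of s] s by auto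
    moreover have "integral {a..s} (\<lambda>x. x * p x) = integral {0..s} (\<lambda>y. y * p y + (- y) * p (- y))"
      using pair_int[OF intXs] s by simp
    moreover have "0 \<le> integral {0..s} (\<lambda>y. y * p y + (- y) * p (- y))"
    proof (rule integral_nonneg', rule ballI)
      fix y assume y: "y \<in> {0..s}"
      have "p (-y) \<le> p y" using y s by (intro pmono) auto
      then have "0 \<le> y * (p y - p (-y))" using y by simp
      then show "0 \<le> y * p y + (- y) * p (- y)" by (simp add: algebra_simps)
    qed
    moreover have "0 < integral {s..b} (\<lambda>x. x * p x)"
    proof (rule pos_int[of _ s b "(s + b) / 2" b "((s + b) / 2) * p ((s + b) / 2)"])
      show "\<forall>x\<in>{s..b}. 0 \<le> x * p x" using s pnnab by auto
      have ppos': "0 < p ((s + b) / 2)" using s bpos by (intro ppos) auto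
      show "\<forall>x\<in>{(s + b) / 2..b}. (s + b) / 2 * p ((s + b) / 2) \<le> x * p x"
      proof
        fix x assume x: "x \<in> {(s + b) / 2..b}"
        show "(s + b) / 2 * p ((s + b) / 2) \<le> x * p x"
        proof (rule mult_mono)
          show "p ((s + b) / 2) \<le> p x" using x s bpos by (intro pmono) auto
        qed (use x s ppos' in auto)
      qed
      show "0 < (s + b) / 2 * p ((s + b) / 2)" using s ppos' by simp
    qed (use intXsb s in auto)
    ultimately show ?thesis by linarith
  qed
  define m where "m = (1 / W) * I1"
  have m: "0 < m" "m < b" using I1pos Wpos I1b by (auto simp: m_def field_simps)
  obtain c where c: "\<forall>x\<in>{0..b}. f m + c * (x - m) \<le> f x"
    using support_line[OF cf m] by auto
  have cm: "f m \<le> c * m" using c[rule_format, of 0] f0 bpos by simp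
  define Lp where "Lp = (\<lambda>x. (f m - c * m) * p x + c * (x * p x))"
  define H where "H = (\<lambda>x. f x * p x - Lp x)"
  have intLp: "Lp integrable_on {a..b}" unfolding Lp_def
    using integrable_add[OF integrable_on_cmult_left[OF intP, of "f m - c * m"]
        integrable_on_cmult_left[OF intX, of c]] by simp
  have intH: "H integrable_on {a..b}" unfolding H_def
    by (rule integrable_diff[OF intF intLp])
  have Hx: "H x = (f x - (f m + c * (x - m))) * p x" for x
    by (simp add: H_def Lp_def algebra_simps)
  have intLpv: "integral {a..b} Lp = f m * W"
  proof -
    have "integral {a..b} Lp = (f m - c * m) * W + c * I1"
      unfolding Lp_def W_def I1_def
      using integral_add[OF integrable_on_cmult_left[OF intP, of "f m - c * m"]
        integrable_on_cmult_left[OF intX, of c]] by simp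
    also have "c * I1 = c * m * W" using Wpos by (simp add: m_def)
    finally show ?thesis by (simp add: algebra_simps)
  qed
  have Hle: "0 \<le> H x" if "0 \<le> x" "x \<le> b" for x
  proof -
    have "0 \<le> f x - (f m + c * (x - m))" using c that by auto
    moreover have "0 \<le> p x" using pnn that bpos by simp
    ultimately show ?thesis unfolding Hx by simp
  qed
  have Hnn: "0 \<le> integral {a..b} H"
  proof (cases "0 \<le> a")
    case True
    show ?thesis by (rule integral_nonneg') (use True Hle in auto)
  next
    case False
    define s where "s = - a"
    have s: "0 < s" "s \<le> b / 3" "a = -s" using False a1 bpos by (auto simp: s_def)
    have intHs: "H integrable_on {-s..s}"
      using integrable_subinterval_real[OF intH] s bpos by auto
    have "integral {a..s} H + integral {s..b} H = integral {a..b} H"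
      using Henstock_Kurzweil_Integration.integral_combine[OF _ _ intH, of s] s bpos by auto
    moreover have "integral {a..s} H = integral {0..s} (\<lambda>y. H y + H (- y))"
      using pair_int[OF intHs] s by simp
    moreover have "0 \<le> integral {0..s} (\<lambda>y. H y + H (- y))"
    proof (rule integral_nonneg', rule ballI)
      fix y assume y: "y \<in> {0..s}"
      have yb: "0 \<le> y" "y \<le> b" using y s bpos by auto
      have "p (-y) \<le> p y" using yb by (intro pmono) auto
      moreover have "0 \<le> p (-y)" using yb by (intro pnn) auto
      moreover have "0 \<le> f y - (f m + c * (x - m))" if "x = y" for x using c yb that by auto
      moreover have fy: "f (-y) = - f y" using odd yb by auto
      ultimately have A: "0 \<le> (f y - (f m + c * (y - m))) * (p y - p (-y))"
        and B: "0 \<le> (c * m - f m) * p (-y)" using cm by auto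
      have "H y + H (- y) = (f y - (f m + c * (y - m))) * (p y - p (-y)) + 2 * ((c * m - f m) * p (-y))"
        unfolding Hx fy by (simp add: algebra_simps)
      then show "0 \<le> H y + H (- y)" using A B by linarith
    qed
    moreover have "0 \<le> integral {s..b} H"
      by (rule integral_nonneg') (use s bpos Hle in auto)
    ultimately show ?thesis by linarith
  qed
  have "integral {a..b} (\<lambda>x. f x * p x) = integral {a..b} H + integral {a..b} Lp"
    unfolding H_def using integral_diff[OF intF intLp] by simp
  then have "f m * W \<le> integral {a..b} (\<lambda>x. f x * p x)" using Hnn intLpv by simp
  then have "f m \<le> (1 / W) * integral {a..b} (\<lambda>x. f x * p x)"
    using Wpos by (simp add: field_simps)
  then show ?thesis unfolding m_def W_def I1_def .
qed

end
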